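(* Let $3 \leq r \leq s \leq t$ be integers. Then for sufficiently large $n$, \[ \mathrm{ex}_r ( n , \textup{Berge-}K_{s,t} ) = O \big( n^{ r - \frac{r (r - 1) }{2s} } \big), \] where the implied constant depends only on $r,s,t$.
   Context: A hypergraph $H$ is a Berge-$F$ (for a graph $F$) if there is a bijection $f : E(F) \to E(H)$ with $e \subseteq f(e)$ for every $e \in E(F)$. $\mathrm{ex}_r(n,\textup{Berge-}F)$ is the maximum number of edges in an $n$-vertex $r$-uniform hypergraph containing no subhypergraph that is a Berge-$F$. *)

theory Defs
  imports Complex_Main
begin

definition uniform_hypergraph :: "nat \<Rightarrow> nat \<Rightarrow> nat set set \<Rightarrow> bool" where
  "uniform_hypergraph r n H \<longleftrightarrow> (\<forall>e\<in>H. e \<subseteq> {0..<n} \<and> card e = r)"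

text \<open>H contains a Berge copy of the graph F (F given as a set of edges, each a 2-set):
  a bijection f from E(F) onto a subhypergraph of H with e \<subseteq> f e.\<close>
definition berge_copy :: "nat set set \<Rightarrow> nat set set \<Rightarrow> bool" where
  "berge_copy F H \<longleftrightarrow> (\<exists>f. inj_on f F \<and> f ` F \<subseteq> H \<and> (\<forall>e\<in>F. e \<subseteq> f e))"

definition is_Kst :: "nat \<Rightarrow> nat \<Rightarrow> nat set set \<Rightarrow> bool" where
  "is_Kst s t F \<longleftrightarrow> (\<exists>A B. finite A \<and> finite B \<and> A \<inter> B = {} \<and> card A = s \<and> card B = t
       \<and> F = {{a, b} | a b. a \<in> A \<and> b \<in> B})"

definition contains_berge_Kst :: "nat \<Rightarrow> nat \<Rightarrow> nat set set \<Rightarrow> bool" where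
  "contains_berge_Kst s t H \<longleftrightarrow> (\<exists>F. is_Kst s t F \<and> berge_copy F H)"

definition ex_berge_Kst :: "nat \<Rightarrow> nat \<Rightarrow> nat \<Rightarrow> nat \<Rightarrow> nat" where
  "ex_berge_Kst r n s t = Max {card H | H. uniform_hypergraph r n H \<and> \<not> contains_berge_Kst s t H}"

end

theory Submission
  imports Defs
begin

definition nbr :: "nat set \<Rightarrow> nat set set \<Rightarrow> nat \<Rightarrow> nat set" where
  "nbr V E v = {u \<in> V. u \<noteq> v \<and> {u, v} \<in> E}"

definition kfree :: "nat \<Rightarrow> nat \<Rightarrow> nat set \<Rightarrow> nat set set \<Rightarrow> bool" where
  "kfree s t V E \<longleftrightarrow> \<not> (\<exists>A B. A \<subseteq> V \<and> B \<subseteq> V \<and> A \<inter> B = {} \<and> card A = s \<and> card B = t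
      \<and> (\<forall>a\<in>A. \<forall>b\<in>B. {a, b} \<in> E))"

definition cliques :: "nat \<Rightarrow> nat set \<Rightarrow> nat set set \<Rightarrow> nat set set" where
  "cliques m V E = {Q. Q \<subseteq> V \<and> card Q = m \<and> (\<forall>x\<in>Q. \<forall>y\<in>Q. x \<noteq> y \<longrightarrow> {x, y} \<in> E)}"

definition gexp :: "nat \<Rightarrow> nat \<Rightarrow> real" where
  "gexp m s = real m - real m * (real m - 1) / (2 * real s)"

lemma cliques_finite: "finite V \<Longrightarrow> finite (cliques m V E)"
  by (rule finite_subset[of _ "Pow V"]) (auto simp: cliques_def)

lemma nbr_sub: "nbr V E v \<subseteq> V" by (auto simp: nbr_def)

lemma common_nbr_small:
  assumes V: "finite V" and kf: "kfree s t V E" and S: "S \<subseteq> V" "card S = s"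
  shows "card {v \<in> V. S \<subseteq> nbr V E v} < t"
proof (rule ccontr)
  assume "\<not> ?thesis"
  then obtain B where B: "B \<subseteq> {v \<in> V. S \<subseteq> nbr V E v}" "card B = t"
    by (meson not_less obtain_subset_with_card_n)
  have 1: "S \<inter> B = {}" using B(1) by (auto simp: nbr_def)
  have 2: "\<forall>a\<in>S. \<forall>b\<in>B. {a, b} \<in> E" using B(1) by (auto simp: nbr_def)
  have 3: "B \<subseteq> V" using B(1) by auto
  show False using kf S B(2) 1 2 3 unfolding kfree_def by blast
qed

lemma card_filter_sum: "finite A \<Longrightarrow> card {x\<in>A. P x} = (\<Sum>x\<in>A. if P x then 1 else 0)"
  using sum.inter_filter[of A "\<lambda>_. 1::nat" P] by simp

lemma degsum:
  assumes V: "finite V" and kf: "kfree s t V E"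
  shows "(\<Sum>v\<in>V. card (nbr V E v) choose s) \<le> t * (card V choose s)"
proof -
  define Ss where "Ss = {S. S \<subseteq> V \<and> card S = s}"
  have fSs: "finite Ss" unfolding Ss_def by (rule finite_subset[of _ "Pow V"]) (auto simp: V)
  have 1: "card (nbr V E v) choose s = (\<Sum>S\<in>Ss. if S \<subseteq> nbr V E v then 1 else 0)" if "v \<in> V" for v
  proof -
    have "card (nbr V E v) choose s = card {S. S \<subseteq> nbr V E v \<and> card S = s}"
      by (rule n_subsets[symmetric]) (rule finite_subset[OF nbr_sub V])
    also have "{S. S \<subseteq> nbr V E v \<and> card S = s} = {S \<in> Ss. S \<subseteq> nbr V E v}"
      using nbr_sub[of V E v] by (auto simp: Ss_def)
    also have "card \<dots> = (\<Sum>S\<in>Ss. if S \<subseteq> nbr V E v then 1 else 0)"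
      by (rule card_filter_sum[OF fSs])
    finally show ?thesis .
  qed
  have "(\<Sum>v\<in>V. card (nbr V E v) choose s) = (\<Sum>v\<in>V. \<Sum>S\<in>Ss. if S \<subseteq> nbr V E v then 1 else 0)"
    using 1 by (rule sum.cong[OF refl])
  also have "\<dots> = (\<Sum>S\<in>Ss. \<Sum>v\<in>V. if S \<subseteq> nbr V E v then 1 else 0)"
    by (rule sum.swap)
  also have "\<dots> = (\<Sum>S\<in>Ss. card {v \<in> V. S \<subseteq> nbr V E v})"
    by (rule sum.cong[OF refl], rule card_filter_sum[OF V, symmetric])
  also have "\<dots> \<le> (\<Sum>S\<in>Ss. t)"
  proof (rule sum_mono)
    fix S assume "S \<in> Ss"
    then have "S \<subseteq> V" "card S = s" by (auto simp: Ss_def)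
    from common_nbr_small[OF V kf this] show "card {v \<in> V. S \<subseteq> nbr V E v} \<le> t" by simp
  qed
  also have "\<dots> = t * (card V choose s)"
    using n_subsets[OF V, of s] by (simp add: Ss_def[symmetric])
  finally show ?thesis .
qed

lemma dpow: "real d ^ s \<le> real s ^ s * (real (d choose s) + 1)"
proof (cases "s \<le> d")
  case True
  have "(real d / real s) ^ s \<le> real (d choose s)" by (rule binomial_ge_n_over_k_pow_k[OF True])
  show ?thesis
  proof (cases "s = 0")
    case False
    then have "real d ^ s = real s ^ s * (real d / real s) ^ s"
      by (simp add: power_divide)
    also have "\<dots> \<le> real s ^ s * real (d choose s)"
      by (rule mult_left_mono) (use \<open>(real d / real s) ^ s \<le> _\<close> in auto)
    finally have "real d ^ s \<le> real s ^ s * real (d choose s)" .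
    moreover have "0 \<le> real s ^ s" by simp
    ultimately show ?thesis unfolding distrib_left mult_1_right by linarith
  qed simp
next
  case False
  then have "real d ^ s \<le> real s ^ s" by (intro power_mono) auto
  moreover have "0 \<le> real s ^ s * real (d choose s)" by simp
  ultimately show ?thesis unfolding distrib_left mult_1_right by linarith
qed

lemma sumpow:
  assumes V: "finite V" and kf: "kfree s t V E" and s: "s \<ge> 1"
  shows "(\<Sum>v\<in>V. real (card (nbr V E v)) ^ s) \<le> real s ^ s * (real t + 1) * real (card V) ^ s"
proof -
  have "(\<Sum>v\<in>V. real (card (nbr V E v)) ^ s) \<le> (\<Sum>v\<in>V. real s ^ s * (real (card (nbr V E v) choose s) + 1))"
    by (rule sum_mono) (rule dpow)
  also have "\<dots> = real s ^ s * (real (\<Sum>v\<in>V. card (nbr V E v) choose s) + real (card V))"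
    by (simp add: sum_distrib_left[symmetric] sum.distrib)
  also have "\<dots> \<le> real s ^ s * (real t * real (card V) ^ s + real (card V) ^ s)"
  proof (rule mult_left_mono)
    have a: "real (\<Sum>v\<in>V. card (nbr V E v) choose s) \<le> real t * real (card V choose s)"
      using degsum[OF V kf] by (metis of_nat_le_iff of_nat_mult)
    have b: "real (card V choose s) \<le> real (card V) ^ s"
    proof (cases "s \<le> card V")
      case True
      have "card V choose s \<le> card V ^ s" by (rule binomial_le_pow[OF True])
      then show ?thesis by (simp only: of_nat_power[symmetric] of_nat_le_iff)
    next
      case False
      then have "card V choose s = 0" by (intro binomial_eq_0) simp
      then show ?thesis by (simp del: binomial_eq_0_iff)
    qed
    have c: "real (card V) \<le> real (card V) ^ s"
    proof (cases "card V = 0")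
      case False
      have "card V \<le> card V ^ s" by (rule self_le_power) (use False s in auto)
      then show ?thesis by (simp only: of_nat_power[symmetric] of_nat_le_iff)
    qed simp
    from a b c show "real (\<Sum>v\<in>V. card (nbr V E v) choose s) + real (card V)
        \<le> real t * real (card V) ^ s + real (card V) ^ s"
    proof -
      have "real t * real (card V choose s) \<le> real t * real (card V) ^ s"
        using b by (intro mult_left_mono) auto
      with a c show ?thesis by linarith
    qed
  qed simp
  also have "\<dots> = real s ^ s * (real t + 1) * real (card V) ^ s"
    by (simp add: algebra_simps)
  finally show ?thesis .
qed

lemma pointwise:
  fixes d l a :: real
  assumes d: "d \<ge> 0" and l: "l > 0" and a: "0 < a" "a < real s"
  shows "d powr a \<le> l powr a + d ^ s * l powr (a - real s)"
proof (cases "d \<le> l")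
  case True
  then have "d powr a \<le> l powr a" using d a by (intro powr_mono2) auto
  moreover have "0 \<le> d ^ s * l powr (a - real s)" using d by simp
  ultimately show ?thesis by linarith
next
  case False
  then have dp: "d > 0" using l by linarith
  have "d powr a = d powr real s * d powr (a - real s)" by (simp add: powr_add[symmetric])
  also have "\<dots> \<le> d powr real s * l powr (a - real s)"
    by (rule mult_left_mono) (use False l a in \<open>auto intro: powr_mono2'\<close>)
  also have "d powr real s = d ^ s" using dp by (simp add: powr_realpow)
  finally have "d powr a \<le> d ^ s * l powr (a - real s)" .
  moreover have "0 \<le> l powr a" by simp
  ultimately show ?thesis by linarith
qed

lemma nbr_free:
  assumes kf: "kfree s t V E" and s: "s \<ge> 1" and v: "v \<in> V" and fin: "finite V"
  shows "kfree (s - 1) t (nbr V E v) E"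
  unfolding kfree_def
proof
  assume "\<exists>A B. A \<subseteq> nbr V E v \<and> B \<subseteq> nbr V E v \<and> A \<inter> B = {} \<and> card A = s - 1 \<and> card B = t
      \<and> (\<forall>a\<in>A. \<forall>b\<in>B. {a, b} \<in> E)"
  then obtain A B where AB: "A \<subseteq> nbr V E v" "B \<subseteq> nbr V E v" "A \<inter> B = {}" "card A = s - 1"
    "card B = t" "\<forall>a\<in>A. \<forall>b\<in>B. {a, b} \<in> E" by blast
  have vA: "v \<notin> A" "v \<notin> B" using AB by (auto simp: nbr_def)
  have fA: "finite A" by (rule finite_subset[OF subset_trans[OF AB(1) nbr_sub] fin])
  have "insert v A \<subseteq> V" "B \<subseteq> V" using AB v nbr_sub by blast+
  moreover have "insert v A \<inter> B = {}" using AB vA by auto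
  moreover have "card (insert v A) = s" using fA vA AB s by simp
  moreover have "\<forall>a\<in>insert v A. \<forall>b\<in>B. {a, b} \<in> E"
    using AB by (auto simp: nbr_def insert_commute)
  ultimately show False using kf AB unfolding kfree_def by blast
qed

lemma clique_cover:
  assumes fin: "finite V" and m: "m \<ge> 1"
  shows "cliques m V E \<subseteq> (\<Union>v\<in>V. insert v ` cliques (m - 1) (nbr V E v) E)"
proof
  fix Q assume Q: "Q \<in> cliques m V E"
  then have QV: "Q \<subseteq> V" and cQ: "card Q = m" and cl: "\<forall>x\<in>Q. \<forall>y\<in>Q. x \<noteq> y \<longrightarrow> {x, y} \<in> E"
    by (auto simp: cliques_def)
  have fQ: "finite Q" by (rule finite_subset[OF QV fin])
  then obtain v where v: "v \<in> Q" using cQ m by fastforce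
  have "Q - {v} \<in> cliques (m - 1) (nbr V E v) E"
    unfolding cliques_def nbr_def using QV cQ cl v fQ by auto
  moreover have "Q = insert v (Q - {v})" using v by auto
  ultimately show "Q \<in> (\<Union>v\<in>V. insert v ` cliques (m - 1) (nbr V E v) E)"
    using v QV by blast
qed

lemma clique_count:
  assumes fin: "finite V" and m: "m \<ge> 1"
  shows "card (cliques m V E) \<le> (\<Sum>v\<in>V. card (cliques (m - 1) (nbr V E v) E))"
proof -
  have "card (cliques m V E) \<le> card (\<Union>v\<in>V. insert v ` cliques (m - 1) (nbr V E v) E)"
    by (rule card_mono[OF _ clique_cover[OF fin m]])
      (intro finite_UN_I fin finite_imageI cliques_finite finite_subset[OF nbr_sub fin])
  also have "\<dots> \<le> (\<Sum>v\<in>V. card (insert v ` cliques (m - 1) (nbr V E v) E))"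
    by (rule card_UN_le[OF fin])
  also have "\<dots> \<le> (\<Sum>v\<in>V. card (cliques (m - 1) (nbr V E v) E))"
    by (rule sum_mono) (rule card_image_le, rule cliques_finite[OF finite_subset[OF nbr_sub fin]])
  finally show ?thesis .
qed

lemma gexp_alg:
  fixes S x :: real
  assumes S: "S > 1"
  shows "1 + (1 - 1/S)*(x - x*(x-1)/(2*(S-1))) = (x+1) - (x+1)*x/(2*S)"
proof -
  have 1: "(1 - 1/S) * (x*(x-1)/(2*(S-1))) = x*(x-1)/(2*S)" using S by (simp add: divide_simps) (simp add: algebra_simps)
  have 2: "(1 - 1/S) * x = x - x/S" by (simp add: algebra_simps)
  have 3: "(x+1)*x/(2*S) = x/S + x*(x-1)/(2*S)" using S by (simp add: divide_simps) (simp add: algebra_simps)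
  have 4: "(1 - 1/S)*(x - x*(x-1)/(2*(S-1))) = (1 - 1/S)*x - (1 - 1/S)*(x*(x-1)/(2*(S-1)))"
    by (rule right_diff_distrib)
  show ?thesis using 1 2 3 4 by linarith
qed

lemma gexp_step:
  assumes "s \<ge> 2"
  shows "1 + (1 - 1 / real s) * gexp m (s - 1) = gexp (Suc m) s"
proof -
  have s1: "real (s - 1) = real s - 1" using assms by simp
  have "real s > 1" using assms by simp
  from gexp_alg[OF this, of "real m"] show ?thesis unfolding gexp_def s1 of_nat_Suc by simp
qed

lemma gexp_bounds:
  assumes "1 \<le> m" "m \<le> s - 1" "s \<ge> 2"
  shows "0 < gexp m (s - 1)" "gexp m (s - 1) < real s"
proof -
  have s1: "real (s - 1) = real s - 1" using assms by simp
  have sp: "real s - 1 > 0" using assms by simp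
  have ms: "real m \<le> real s - 1" using assms by linarith
  have h: "real m * (real m - 1) \<le> (real m - 1) * (real s - 1)"
    using ms assms by (subst mult.commute) (intro mult_right_mono, auto)
  have "real m * (real m - 1) / (2 * (real s - 1)) \<le> (real m - 1) / 2"
  proof -
    have "real m * (real m - 1) / (2 * (real s - 1)) \<le> (real m - 1) * (real s - 1) / (2 * (real s - 1))"
      using h sp by (intro divide_right_mono) auto
    also have "\<dots> = (real m - 1) / 2"
    proof -
      have g: "\<And>a b::real. b \<noteq> 0 \<Longrightarrow> a * b / (2 * b) = a / 2" by simp
      show ?thesis by (rule g) (use sp in simp)
    qed
    finally show ?thesis .
  qed
  moreover have "0 \<le> real m * (real m - 1) / (2 * (real s - 1))"
    using sp assms by simp
  moreover have "gexp m (s - 1) = real m - real m * (real m - 1) / (2 * (real s - 1))"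
    unfolding gexp_def s1 by simp
  moreover have "real m \<ge> 1" using assms by simp
  ultimately have F: "real m * (real m - 1) / (2 * (real s - 1)) \<le> (real m - 1) / 2"
    "0 \<le> real m * (real m - 1) / (2 * (real s - 1))"
    "gexp m (s - 1) = real m - real m * (real m - 1) / (2 * (real s - 1))" "1 \<le> real m" by blast+
  have L: "\<And>X g. X \<le> (real m - 1) / 2 \<Longrightarrow> 0 \<le> X \<Longrightarrow> g = real m - X \<Longrightarrow> 0 < g \<and> g < real s"
  proof -
    fix X g assume "X \<le> (real m - 1) / 2" "0 \<le> X" "g = real m - X"
    moreover from this(1) have "2 * X \<le> real m - 1" by (simp add: field_simps)
    ultimately show "0 < g \<and> g < real s" using F(4) ms by auto
  qed
  show "0 < gexp m (s - 1)" using L[OF F(1,2,3)] by blast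
  show "gexp m (s - 1) < real s" using L[OF F(1,2,3)] by blast
qed

lemma main_count:
  "1 \<le> m \<Longrightarrow> m \<le> s \<Longrightarrow> \<exists>c>0. \<forall>V E. finite V \<longrightarrow> kfree s t V E \<longrightarrow>
      real (card (cliques m V E)) \<le> c * real (card V) powr gexp m s"
proof (induction m arbitrary: s)
  case 0
  then show ?case by simp
next
  case (Suc m)
  show ?case
  proof (cases "m = 0")
    case True
    have "real (card (cliques (Suc m) V E)) \<le> 1 * real (card V) powr gexp (Suc m) s" if "finite V" for V E
    proof -
      have "cliques (Suc m) V E \<subseteq> (\<lambda>v. {v}) ` V"
      proof
        fix Q assume "Q \<in> cliques (Suc m) V E"
        then have Q: "Q \<subseteq> V" "card Q = 1" using True by (auto simp: cliques_def)
        then obtain x where "Q = {x}" by (meson card_1_singletonE)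
        then show "Q \<in> (\<lambda>v. {v}) ` V" using Q by auto
      qed
      then have "card (cliques (Suc m) V E) \<le> card ((\<lambda>v. {v}) ` V)"
        using that by (intro card_mono) auto
      also have "\<dots> \<le> card V" using that by (rule card_image_le)
      finally have "real (card (cliques (Suc m) V E)) \<le> real (card V)" by (simp only: of_nat_le_iff)
      moreover have "gexp (Suc m) s = 1" using True by (simp add: gexp_def)
      ultimately show ?thesis by simp
    qed
    then show ?thesis by (intro exI[of _ 1]) auto
  next
    case False
    have s2: "s \<ge> 2" and ms: "1 \<le> m" "m \<le> s - 1" using Suc.prems False by auto
    obtain c where c: "c > 0" and cb: "\<And>V E. finite V \<Longrightarrow> kfree (s - 1) t V E \<Longrightarrow>
        real (card (cliques m V E)) \<le> c * real (card V) powr gexp m (s - 1)"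
      using Suc.IH[OF ms] by blast
    define a where "a = gexp m (s - 1)"
    define K where "K = real s ^ s * (real t + 1)"
    have a: "0 < a" "a < real s" using gexp_bounds[OF ms s2] by (auto simp: a_def)
    have K: "K \<ge> 0" by (simp add: K_def)
    have hg: "1 + (1 - 1 / real s) * a = gexp (Suc m) s" unfolding a_def by (rule gexp_step[OF s2])
    have "real (card (cliques (Suc m) V E)) \<le> (c * (1 + K)) * real (card V) powr gexp (Suc m) s"
      if V: "finite V" and kf: "kfree s t V E" for V E
    proof (cases "card V = 0")
      case True
      then have "V = {}" using V by simp
      then have "cliques (Suc m) V E = {}" by (auto simp: cliques_def)
      then show ?thesis using True by simp
    next
      case False
      define n where "n = real (card V)"
      have n: "n > 0" using False by (simp add: n_def)
      define l where "l = n powr (1 - 1 / real s)"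
      have l: "l > 0" using n by (simp add: l_def)
      define d where "d = (\<lambda>v. real (card (nbr V E v)))"
      have cc: "card (cliques (Suc m) V E) \<le> (\<Sum>v\<in>V. card (cliques m (nbr V E v) E))"
        using clique_count[OF V, of "Suc m" E] by simp
      have "real (card (cliques (Suc m) V E)) \<le> real (\<Sum>v\<in>V. card (cliques m (nbr V E v) E))"
        using cc by (simp only: of_nat_le_iff)
      also have "\<dots> = (\<Sum>v\<in>V. real (card (cliques m (nbr V E v) E)))" by simp
      also have "\<dots> \<le> (\<Sum>v\<in>V. c * d v powr a)"
      proof (rule sum_mono)
        fix v assume v: "v \<in> V"
        show "real (card (cliques m (nbr V E v) E)) \<le> c * d v powr a"
          unfolding d_def a_def
          by (rule cb[OF finite_subset[OF nbr_sub V] nbr_free[OF kf _ v V]]) (use s2 in simp)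
      qed
      also have "\<dots> \<le> (\<Sum>v\<in>V. c * (l powr a + d v ^ s * l powr (a - real s)))"
        by (rule sum_mono, rule mult_left_mono, rule pointwise) (use l a c in \<open>auto simp: d_def\<close>)
      also have "\<dots> = c * (n * l powr a + l powr (a - real s) * (\<Sum>v\<in>V. d v ^ s))"
      proof -
        have "(\<Sum>v\<in>V. c * (l powr a + d v ^ s * l powr (a - real s)))
            = c * (\<Sum>v\<in>V. (l powr a + d v ^ s * l powr (a - real s)))"
          by (rule sum_distrib_left[symmetric])
        also have "(\<Sum>v\<in>V. (l powr a + d v ^ s * l powr (a - real s)))
            = (\<Sum>v\<in>V. l powr a) + (\<Sum>v\<in>V. d v ^ s * l powr (a - real s))"
          by (rule sum.distrib)
        also have "(\<Sum>v\<in>V. d v ^ s * l powr (a - real s)) = (\<Sum>v\<in>V. d v ^ s) * l powr (a - real s)"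
          by (rule sum_distrib_right[symmetric])
        also have "(\<Sum>v\<in>V. l powr a) = n * l powr a" by (simp add: n_def)
        finally show ?thesis by (simp only: mult.commute)
      qed
      also have "\<dots> \<le> c * (n * l powr a + l powr (a - real s) * (K * n ^ s))"
      proof -
        have sp: "(\<Sum>v\<in>V. d v ^ s) \<le> K * n ^ s"
          using sumpow[OF V kf] s2 unfolding K_def n_def d_def by simp
        have "l powr (a - real s) * (\<Sum>v\<in>V. d v ^ s) \<le> l powr (a - real s) * (K * n ^ s)"
          using sp by (rule mult_left_mono) simp
        then have "n * l powr a + l powr (a - real s) * (\<Sum>v\<in>V. d v ^ s)
            \<le> n * l powr a + l powr (a - real s) * (K * n ^ s)" by (rule add_left_mono)
        then show ?thesis using c by (intro mult_left_mono) auto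
      qed
      also have "n * l powr a = n powr gexp (Suc m) s"
      proof -
        have "l powr a = n powr ((1 - 1 / real s) * a)" by (simp add: l_def powr_powr)
        moreover have "n powr (1 + (1 - 1 / real s) * a) = n * n powr ((1 - 1 / real s) * a)"
          using n by (simp add: powr_add)
        ultimately show ?thesis using hg by simp
      qed
      also have "l powr (a - real s) * (K * n ^ s) = K * n powr gexp (Suc m) s"
      proof -
        have "l powr (a - real s) = n powr ((1 - 1 / real s) * (a - real s))" by (simp add: l_def powr_powr)
        moreover have "n ^ s = n powr real s" using n by (simp add: powr_realpow)
        moreover have "n powr ((1 - 1 / real s) * (a - real s)) * n powr real s
            = n powr ((1 - 1 / real s) * (a - real s) + real s)" by (simp add: powr_add)
        moreover have "(1 - 1 / real s) * (a - real s) + real s = 1 + (1 - 1 / real s) * a"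
        proof -
          have e1: "(1 - 1 / real s) * (a - real s) = (1 - 1 / real s) * a - (1 - 1 / real s) * real s"
            by (rule right_diff_distrib)
          have e2: "(1 - 1 / real s) * real s = real s - 1" using s2 by (simp add: left_diff_distrib)
          show ?thesis using e1 e2 by linarith
        qed
        ultimately have "l powr (a - real s) * n ^ s = n powr gexp (Suc m) s" using hg by simp
        then show ?thesis by (simp only: mult.left_commute[of _ K])
      qed
      also have "c * (n powr gexp (Suc m) s + K * n powr gexp (Suc m) s)
          = (c * (1 + K)) * n powr gexp (Suc m) s" by (simp add: algebra_simps)
      finally show ?thesis by (simp only: n_def)
    qed
    then show ?thesis using c K by (intro exI[of _ "c * (1 + K)"]) auto
  qed
qed

lemma berge_reduction:
  assumes H: "uniform_hypergraph r n H" and nb: "\<not> contains_berge_Kst s t H"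
  shows "\<exists>E. kfree s t {0..<n} E \<and> card H \<le> card (cliques 2 {0..<n} E) + card (cliques r {0..<n} E)"
proof -
  define V where "V = {0..<n::nat}"
  have HV: "H \<subseteq> Pow V" using H by (auto simp: uniform_hypergraph_def V_def)
  have fH: "finite H" using HV by (rule finite_subset) (simp add: V_def)
  define P where "P = (\<lambda>B. B \<subseteq> H \<and> (\<exists>g. inj_on g B \<and> (\<forall>e\<in>B. g e \<subseteq> e \<and> card (g e) = 2)))"
  have P0: "P {}" by (simp add: P_def)
  have Pb: "\<forall>B. P B \<longrightarrow> card B < card H + 1"
    using fH by (auto simp: P_def intro: card_mono le_imp_less_Suc)
  obtain B where PB: "P B" and Bmax: "\<And>B'. P B' \<Longrightarrow> card B' \<le> card B"
    using Lattices_Big.ex_has_greatest_nat[OF P0 Pb] by blast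
  from PB obtain g where BH: "B \<subseteq> H" and ginj: "inj_on g B"
    and gsub: "\<And>e. e \<in> B \<Longrightarrow> g e \<subseteq> e" and gcard: "\<And>e. e \<in> B \<Longrightarrow> card (g e) = 2"
    unfolding P_def by blast
  have fB: "finite B" using BH fH by (rule finite_subset)
  define E where "E = g ` B"
  have rest: "H - B \<subseteq> cliques r V E"
  proof
    fix e assume e: "e \<in> H - B"
    have eV: "e \<subseteq> V" and ce: "card e = r" using e H by (auto simp: uniform_hypergraph_def V_def)
    have "{x, y} \<in> E" if xy: "x \<in> e" "y \<in> e" "x \<noteq> y" for x y
    proof (rule ccontr)
      assume nE: "{x, y} \<notin> E"
      define g' where "g' = g(e := {x, y})"
      have "inj_on g' (insert e B)"
        unfolding inj_on_def
      proof (intro ballI impI)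
        fix u w assume u: "u \<in> insert e B" and w: "w \<in> insert e B" and eq: "g' u = g' w"
        have eB: "e \<notin> B" using e by blast
        show "u = w"
        proof (cases "u = e"; cases "w = e")
          assume "u = e" "w \<noteq> e"
          then have "w \<in> B" "g w = {x, y}" using w eq by (auto simp: g'_def)
          then show ?thesis using nE by (auto simp: E_def)
        next
          assume "u \<noteq> e" "w = e"
          then have "u \<in> B" "g u = {x, y}" using u eq by (auto simp: g'_def)
          then show ?thesis using nE by (auto simp: E_def)
        next
          assume "u \<noteq> e" "w \<noteq> e"
          then show ?thesis using u w eq ginj by (auto simp: g'_def inj_on_def)
        qed simp
      qed
      moreover have "\<forall>u\<in>insert e B. g' u \<subseteq> u \<and> card (g' u) = 2"
        using gsub gcard xy by (auto simp: g'_def)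
      moreover have "insert e B \<subseteq> H" using e BH by blast
      ultimately have "P (insert e B)" unfolding P_def by blast
      then have "card (insert e B) \<le> card B" by (rule Bmax)
      moreover have "card (insert e B) = card B + 1" using fB e by simp
      ultimately show False by simp
    qed
    then show "e \<in> cliques r V E" using eV ce by (auto simp: cliques_def)
  qed
  have Ecl: "E \<subseteq> cliques 2 V E"
  proof
    fix p assume p: "p \<in> E"
    then obtain e where e: "e \<in> B" "p = g e" by (auto simp: E_def)
    then have "card p = 2" using gcard by simp
    then obtain x y where xy: "p = {x, y}" "x \<noteq> y" by (meson card_2_iff)
    have "p \<subseteq> V" using e gsub BH HV by blast
    then show "p \<in> cliques 2 V E" using p xy \<open>card p = 2\<close>
      by (auto simp: cliques_def insert_commute)
  qed
  have fV: "finite V" by (simp add: V_def)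
  have "card H \<le> card B + card (H - B)"
    by (metis BH Diff_partition card_Un_le)
  also have "card B = card E" unfolding E_def using ginj by (simp add: card_image)
  also have "card E \<le> card (cliques 2 V E)" by (rule card_mono[OF cliques_finite[OF fV] Ecl])
  also have "card (H - B) \<le> card (cliques r V E)" by (rule card_mono[OF cliques_finite[OF fV] rest])
  finally have cardH: "card H \<le> card (cliques 2 V E) + card (cliques r V E)" by simp
  have kf: "kfree s t V E"
    unfolding kfree_def
  proof
    assume "\<exists>A B0. A \<subseteq> V \<and> B0 \<subseteq> V \<and> A \<inter> B0 = {} \<and> card A = s \<and> card B0 = t
      \<and> (\<forall>a\<in>A. \<forall>b\<in>B0. {a, b} \<in> E)"
    then obtain A B0 where AB: "A \<subseteq> V" "B0 \<subseteq> V" "A \<inter> B0 = {}" "card A = s" "card B0 = t"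
      "\<forall>a\<in>A. \<forall>b\<in>B0. {a, b} \<in> E" by blast
    define F where "F = {{a, b} | a b. a \<in> A \<and> b \<in> B0}"
    have "is_Kst s t F" unfolding is_Kst_def F_def
      using AB finite_subset[OF AB(1) fV] finite_subset[OF AB(2) fV] by blast
    moreover have "berge_copy F H"
      unfolding berge_copy_def
    proof (intro exI conjI)
      have FE: "F \<subseteq> g ` B" using AB(6) by (auto simp: F_def E_def)
      have inv1: "the_inv_into B g p \<in> B" if "p \<in> F" for p
        using FE that ginj by (auto intro: the_inv_into_into)
      have inv2: "g (the_inv_into B g p) = p" if "p \<in> F" for p
        by (rule f_the_inv_into_f[OF ginj]) (use FE that in blast)
      show "inj_on (the_inv_into B g) F"
        unfolding inj_on_def using inv2 by metis
      show "the_inv_into B g ` F \<subseteq> H" using inv1 BH by blast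
      show "\<forall>e\<in>F. e \<subseteq> the_inv_into B g e" using inv1 inv2 gsub by metis
    qed
    ultimately show False using nb unfolding contains_berge_Kst_def by blast
  qed
  show ?thesis using kf cardH unfolding V_def by blast
qed

lemma expcmp:
  fixes R S :: real
  assumes "S > 0" "R \<ge> 2" "R + 1 \<le> 2 * S"
  shows "2 - 2 * (2 - 1) / (2 * S) \<le> R - R * (R - 1) / (2 * S)"
proof -
  have h1: "R * (R - 1) - 2 = (R - 2) * (R + 1)" by (simp add: algebra_simps)
  have h2: "(R - 2) * (R + 1) \<le> (R - 2) * (2 * S)" using assms by (intro mult_left_mono) auto
  have h3: "(R * (R - 1) - 2) / (2 * S) \<le> R - 2 \<longleftrightarrow> R * (R - 1) - 2 \<le> (R - 2) * (2 * S)"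
    by (rule pos_divide_le_eq) (use assms in simp)
  have h4: "(R * (R - 1) - 2) / (2 * S) = R * (R - 1) / (2 * S) - 2 / (2 * S)"
    by (rule diff_divide_distrib)
  have "R * (R - 1) / (2 * S) - 2 / (2 * S) \<le> R - 2" using h1 h2 h3 h4 by simp
  then show ?thesis by simp
qed

theorem theorem1p6:
  fixes r s t :: nat
  assumes "3 \<le> r" "r \<le> s" "s \<le> t"
  shows "\<exists>C::real. C > 0 \<and> (\<exists>N. \<forall>n\<ge>N.
           real (ex_berge_Kst r n s t) \<le> C * real n powr (real r - real r * (real r - 1) / (2 * real s)))"
proof -
  obtain c2 where c2: "c2 > 0" and b2: "\<And>V E. finite V \<Longrightarrow> kfree s t V E \<Longrightarrow>
      real (card (cliques 2 V E)) \<le> c2 * real (card V) powr gexp 2 s"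
    using main_count[of 2 s t] assms by auto
  obtain cr where cr: "cr > 0" and br: "\<And>V E. finite V \<Longrightarrow> kfree s t V E \<Longrightarrow>
      real (card (cliques r V E)) \<le> cr * real (card V) powr gexp r s"
    using main_count[of r s t] assms by auto
  have gle: "gexp 2 s \<le> gexp r s"
    using expcmp[of "real s" "real r"] assms unfolding gexp_def by simp
  have "real (ex_berge_Kst r n s t) \<le> (c2 + cr) * real n powr gexp r s" if n: "n \<ge> 1" for n
  proof -
    define S where "S = {card H | H. uniform_hypergraph r n H \<and> \<not> contains_berge_Kst s t H}"
    have "S \<subseteq> card ` Pow (Pow {0..<n})"
    proof
      fix x assume "x \<in> S"
      then obtain H where "x = card H" "uniform_hypergraph r n H" unfolding S_def by blast
      then have "H \<in> Pow (Pow {0..<n})" "x = card H" unfolding uniform_hypergraph_def by auto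
      then show "x \<in> card ` Pow (Pow {0..<n})" by blast
    qed
    then have fS: "finite S" by (rule finite_subset) simp
    have kst_ne: "F \<noteq> {}" if Fk: "is_Kst s t F" for F
    proof -
      obtain A B where F0: "F = {{a, b} | a b. a \<in> A \<and> b \<in> B}" "card A = s" "card B = t"
        using Fk unfolding is_Kst_def by blast
      have "A \<noteq> {}" using F0(2) assms by (metis card.empty not_numeral_le_zero le_trans)
      moreover have "B \<noteq> {}" using F0(3) assms by (metis card.empty not_numeral_le_zero le_trans)
      ultimately obtain a b where "a \<in> A" "b \<in> B" by blast
      then have "{a, b} \<in> F" unfolding F0(1) by blast
      then show ?thesis by blast
    qed
    have "\<not> contains_berge_Kst s t {}"
    proof
      assume "contains_berge_Kst s t {}"
      then have "\<exists>F. is_Kst s t F \<and> berge_copy F {}" by (simp only: contains_berge_Kst_def)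
      then obtain F where F1: "is_Kst s t F" and F2: "berge_copy F {}" by (elim exE conjE)
      from F2 have "\<exists>f. f ` F \<subseteq> {}" unfolding berge_copy_def by (elim exE conjE) blast
      then obtain f where "f ` F \<subseteq> {}" by (rule exE)
      then have "F = {}" by simp
      with kst_ne[OF F1] show False by contradiction
    qed
    moreover have "uniform_hypergraph r n {}" by (simp add: uniform_hypergraph_def)
    ultimately have "card ({}::nat set set) \<in> S" unfolding S_def by blast
    then have "0 \<in> S" by simp
    then have "Max S \<in> S" using fS by (intro Max_in) auto
    then obtain H where H: "uniform_hypergraph r n H" "\<not> contains_berge_Kst s t H"
      and eq: "ex_berge_Kst r n s t = card H"
      unfolding S_def ex_berge_Kst_def by auto
    obtain E where kf: "kfree s t {0..<n} E"
      and cH: "card H \<le> card (cliques 2 {0..<n} E) + card (cliques r {0..<n} E)"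
      using berge_reduction[OF H] by blast
    have "real (card H) \<le> real (card (cliques 2 {0..<n} E)) + real (card (cliques r {0..<n} E))"
      using cH by (metis of_nat_add of_nat_le_iff)
    also have "\<dots> \<le> c2 * real n powr gexp 2 s + cr * real n powr gexp r s"
      using b2[OF _ kf] br[OF _ kf] by (intro add_mono) auto
    also have "c2 * real n powr gexp 2 s \<le> c2 * real n powr gexp r s"
      using n gle c2 by (intro mult_left_mono powr_mono) auto
    finally show ?thesis unfolding eq by (simp add: algebra_simps)
  qed
  then show ?thesis using c2 cr unfolding gexp_def
    by (intro exI[of _ "c2 + cr"] conjI exI[of _ 1]) auto
qed

end
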